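(* Let $p\in(0,1)$ and let $\mathcal{F},\mathcal{G}\subseteq 2^{[n]}$ be cross-Sperner families. Then $\mu_p(\mathcal{F})^{1/2}+\mu_p(\mathcal{G})^{1/2}\le 1$.
   Context: Families $\mathcal{F},\mathcal{G}\subseteq 2^{[n]}$ are cross-Sperner if for all $F\in\mathcal{F}$ and $G\in\mathcal{G}$ neither $F\subseteq G$ nor $G\subseteq F$. For $p\in(0,1)$ and $F\subseteq[n]$, $\mu_p(F)=p^{|F|}(1-p)^{n-|F|}$, and $\mu_p(\mathcal{F})=\sum_{F\in\mathcal{F}}\mu_p(F)$. *)

theory Defs
  imports Main Complex_Main
begin

definition cross_Sperner :: "'a set set \<Rightarrow> 'a set set \<Rightarrow> bool" where
  "cross_Sperner \<F> \<G> \<longleftrightarrow> (\<forall>F\<in>\<F>. \<forall>G\<in>\<G>. \<not> F \<subseteq> G \<and> \<not> G \<subseteq> F)"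

definition mu_p :: "real \<Rightarrow> nat \<Rightarrow> nat set \<Rightarrow> real" where
  "mu_p p n F = p ^ card F * (1 - p) ^ (n - card F)"

definition mu_p_fam :: "real \<Rightarrow> nat \<Rightarrow> nat set set \<Rightarrow> real" where
  "mu_p_fam p n \<F> = (\<Sum>F\<in>\<F>. mu_p p n F)"

end

theory Submission
  imports Defs
begin

definition EE :: "real \<Rightarrow> nat set \<Rightarrow> (nat set \<Rightarrow> real) \<Rightarrow> real" where
  "EE p S h = (\<Sum>X\<in>Pow S. p ^ card X * (1-p) ^ (card S - card X) * h X)"

lemma EE_empty: "EE p {} h = h {}"
  by (simp add: EE_def)

lemma EE_insert:
  assumes "finite S" "a \<notin> S"
  shows "EE p (insert a S) h = (1-p) * EE p S h + p * EE p S (\<lambda>X. h (insert a X))"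
proof -
  have fin: "finite (Pow S)" using assms by simp
  have inj: "inj_on (insert a) (Pow S)" unfolding inj_on_def
  proof (intro ballI impI)
    fix x y assume "x \<in> Pow S" "y \<in> Pow S" "insert a x = insert a y"
    then show "x = y" using assms by (metis PowD insert_ident subsetD)
  qed
  have disj: "Pow S \<inter> insert a ` Pow S = {}" using assms by blast
  have cS: "card (insert a S) = Suc (card S)" using assms by simp
  have "EE p (insert a S) h = (\<Sum>X\<in>Pow S. p ^ card X * (1-p) ^ (card (insert a S) - card X) * h X)
      + (\<Sum>X\<in>insert a ` Pow S. p ^ card X * (1-p) ^ (card (insert a S) - card X) * h X)"
    unfolding EE_def Pow_insert using fin disj by (simp add: sum.union_disjoint)
  also have "(\<Sum>X\<in>Pow S. p ^ card X * (1-p) ^ (card (insert a S) - card X) * h X)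
      = (1-p) * EE p S h"
    unfolding EE_def sum_distrib_left
  proof (rule sum.cong[OF refl])
    fix X assume "X \<in> Pow S"
    then have "card X \<le> card S" using assms by (simp add: card_mono)
    then have "card (insert a S) - card X = Suc (card S - card X)" using cS by simp
    then show "p ^ card X * (1-p) ^ (card (insert a S) - card X) * h X
       = (1-p) * (p ^ card X * (1-p) ^ (card S - card X) * h X)" by simp
  qed
  also have "(\<Sum>X\<in>insert a ` Pow S. p ^ card X * (1-p) ^ (card (insert a S) - card X) * h X)
      = p * EE p S (\<lambda>X. h (insert a X))"
    unfolding EE_def sum_distrib_left sum.reindex[OF inj] o_def
  proof (rule sum.cong[OF refl])
    fix X assume X: "X \<in> Pow S"
    then have "finite X" "a \<notin> X" using assms finite_subset by auto
    then have "card (insert a X) = Suc (card X)" by simp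
    then show "p ^ card (insert a X) * (1-p) ^ (card (insert a S) - card (insert a X)) * h (insert a X)
       = p * (p ^ card X * (1-p) ^ (card S - card X) * h (insert a X))" using cS by simp
  qed
  finally show ?thesis .
qed

lemma EE_one: "finite S \<Longrightarrow> EE p S (\<lambda>_. 1) = 1"
  by (induction S rule: finite_induct) (simp_all add: EE_empty EE_insert algebra_simps)

lemma EE_add: "EE p S (\<lambda>X. f X + g X) = EE p S f + EE p S g"
  unfolding EE_def by (simp add: algebra_simps sum.distrib)

lemma EE_mono:
  assumes "0 \<le> p" "p \<le> 1" "\<And>X. X \<subseteq> S \<Longrightarrow> f X \<le> g X"
  shows "EE p S f \<le> EE p S g"
  unfolding EE_def
proof (rule sum_mono)
  fix X assume "X \<in> Pow S"
  then show "p ^ card X * (1-p) ^ (card S - card X) * f X \<le> p ^ card X * (1-p) ^ (card S - card X) * g X"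
    using assms by (intro mult_left_mono) auto
qed

lemma harris:
  assumes "finite S" "0 \<le> p" "p \<le> 1"
  shows "(\<forall>X Y. X \<subseteq> Y \<longrightarrow> Y \<subseteq> S \<longrightarrow> f X \<le> f Y) \<longrightarrow>
         (\<forall>X Y. X \<subseteq> Y \<longrightarrow> Y \<subseteq> S \<longrightarrow> g Y \<le> g X) \<longrightarrow>
         EE p S (\<lambda>X. f X * g X) \<le> EE p S f * EE p S g"
  using assms(1)
proof (induction S arbitrary: f g rule: finite_induct)
  case empty
  then show ?case by (simp add: EE_empty)
next
  case (insert a S)
  show ?case
  proof (intro impI)
    assume f: "\<forall>X Y. X \<subseteq> Y \<longrightarrow> Y \<subseteq> insert a S \<longrightarrow> f X \<le> f Y"
      and g: "\<forall>X Y. X \<subseteq> Y \<longrightarrow> Y \<subseteq> insert a S \<longrightarrow> g Y \<le> g X"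
    let ?f1 = "\<lambda>X. f (insert a X)" and ?g1 = "\<lambda>X. g (insert a X)"
    define a0 where "a0 = EE p S f"
    define a1 where "a1 = EE p S ?f1"
    define b0 where "b0 = EE p S g"
    define b1 where "b1 = EE p S ?g1"
    have h0: "EE p S (\<lambda>X. f X * g X) \<le> a0 * b0"
      using insert.IH[of f g] f g unfolding a0_def b0_def by blast
    have h1: "EE p S (\<lambda>X. ?f1 X * ?g1 X) \<le> a1 * b1"
      using insert.IH[of ?f1 ?g1] f g unfolding a1_def b1_def
      by (meson insert_mono)
    have ha: "a0 \<le> a1" unfolding a0_def a1_def
      using assms by (intro EE_mono) (auto intro!: f[rule_format])
    have hb: "b1 \<le> b0" unfolding b0_def b1_def
      using assms by (intro EE_mono) (auto intro!: g[rule_format])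
    have "EE p (insert a S) (\<lambda>X. f X * g X) \<le> (1-p) * (a0*b0) + p * (a1*b1)"
      using h0 h1 assms insert.hyps by (simp add: EE_insert add_mono mult_left_mono)
    also have "\<dots> \<le> ((1-p)*a0 + p*a1) * ((1-p)*b0 + p*b1)"
    proof -
      have "0 \<le> p*(1-p)*((a1-a0)*(b0-b1))" using ha hb assms by simp
      then show ?thesis by (simp add: algebra_simps power2_eq_square)
    qed
    also have "\<dots> = EE p (insert a S) f * EE p (insert a S) g"
      using insert.hyps by (simp add: EE_insert a0_def a1_def b0_def b1_def)
    finally show "EE p (insert a S) (\<lambda>X. f X * g X) \<le> EE p (insert a S) f * EE p (insert a S) g" .
  qed
qed

lemma final_arith:
  fixes a b c d mF mG :: real
  assumes "0 \<le> a" "0 \<le> b" "0 \<le> c" "0 \<le> d" "mF \<le> a*b" "mG \<le> c*d"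
    "a + d \<le> 1" "b + c \<le> 1"
  shows "sqrt mF + sqrt mG \<le> 1"
proof -
  have sq: "sqrt m \<le> (x+y)/2" if "m \<le> x*y" "0 \<le> x" "0 \<le> y" for m x y :: real
  proof -
    have "0 \<le> (x-y)^2" by simp
    then have "m \<le> ((x+y)/2)^2" using that(1) by (simp add: power2_eq_square algebra_simps)
    then have "sqrt m \<le> sqrt (((x+y)/2)^2)" by (rule real_sqrt_le_mono)
    also have "\<dots> = (x+y)/2" using that(2,3) by simp
    finally show ?thesis .
  qed
  show ?thesis using sq[OF assms(5,1,2)] sq[OF assms(6,3,4)] assms(7,8) by (simp add: field_simps)
qed

theorem theorem2p2:
  fixes p :: real and n :: nat and \<F> \<G> :: "nat set set"
  assumes "0 < p" "p < 1"
    and "\<F> \<subseteq> Pow {1..n}" "\<G> \<subseteq> Pow {1..n}"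
    and "cross_Sperner \<F> \<G>"
  shows "sqrt (mu_p_fam p n \<F>) + sqrt (mu_p_fam p n \<G>) \<le> 1"
proof -
  define S where "S = {1..n}"
  have finS: "finite S" and cS: "card S = n" unfolding S_def by auto
  have p0: "0 \<le> p" and p1: "p \<le> 1" using assms by auto
  have cs: "\<And>F G. F \<in> \<F> \<Longrightarrow> G \<in> \<G> \<Longrightarrow> \<not> F \<subseteq> G \<and> \<not> G \<subseteq> F"
    using assms(5) unfolding cross_Sperner_def by blast
  have mu: "mu_p_fam p n \<H> = EE p S (\<lambda>X. if X \<in> \<H> then 1 else 0)" if "\<H> \<subseteq> Pow S" for \<H>
  proof -
    have "mu_p_fam p n \<H> = (\<Sum>X\<in>Pow S \<inter> \<H>. p ^ card X * (1-p) ^ (card S - card X))"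
      unfolding mu_p_fam_def mu_p_def cS using that by (simp add: Int_absorb1)
    also have "\<dots> = EE p S (\<lambda>X. if X \<in> \<H> then 1 else 0)"
      unfolding EE_def using finS by (simp add: sum.inter_restrict, intro sum.cong) auto
    finally show ?thesis .
  qed
  define uF where "uF = (\<lambda>X. if \<exists>F\<in>\<F>. F \<subseteq> X then 1 else (0::real))"
  define dF where "dF = (\<lambda>X. if \<exists>F\<in>\<F>. X \<subseteq> F then 1 else (0::real))"
  define uG where "uG = (\<lambda>X. if \<exists>F\<in>\<G>. F \<subseteq> X then 1 else (0::real))"
  define dG where "dG = (\<lambda>X. if \<exists>F\<in>\<G>. X \<subseteq> F then 1 else (0::real))"
  have hF: "mu_p_fam p n \<F> \<le> EE p S uF * EE p S dF"
  proof -
    have "mu_p_fam p n \<F> \<le> EE p S (\<lambda>X. uF X * dF X)"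
      unfolding mu[OF assms(3)[folded S_def]] using p0 p1
      by (intro EE_mono) (auto simp: uF_def dF_def)
    also have "\<dots> \<le> EE p S uF * EE p S dF"
      by (rule harris[OF finS p0 p1, rule_format]) (auto simp: uF_def dF_def intro: order_trans)
    finally show ?thesis .
  qed
  have hG: "mu_p_fam p n \<G> \<le> EE p S uG * EE p S dG"
  proof -
    have "mu_p_fam p n \<G> \<le> EE p S (\<lambda>X. uG X * dG X)"
      unfolding mu[OF assms(4)[folded S_def]] using p0 p1
      by (intro EE_mono) (auto simp: uG_def dG_def)
    also have "\<dots> \<le> EE p S uG * EE p S dG"
      by (rule harris[OF finS p0 p1, rule_format]) (auto simp: uG_def dG_def intro: order_trans)
    finally show ?thesis .
  qed
  have pw_uF: "uF X + dG X \<le> 1" for X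
  proof (cases "\<exists>F\<in>\<F>. F \<subseteq> X")
    case True then have "\<not>(\<exists>G\<in>\<G>. X \<subseteq> G)" using cs by blast
    then show ?thesis using True by (simp add: uF_def dG_def)
  next
    case False then show ?thesis by (simp add: uF_def dG_def)
  qed
  have pw_dF: "dF X + uG X \<le> 1" for X
  proof (cases "\<exists>F\<in>\<G>. F \<subseteq> X")
    case True then have "\<not>(\<exists>G\<in>\<F>. X \<subseteq> G)" using cs by blast
    then show ?thesis using True by (simp add: uG_def dF_def)
  next
    case False then show ?thesis by (simp add: uG_def dF_def)
  qed
  have s1: "EE p S uF + EE p S dG \<le> 1"
  proof -
    have "EE p S uF + EE p S dG = EE p S (\<lambda>X. uF X + dG X)" by (simp add: EE_add)
    also have "\<dots> \<le> EE p S (\<lambda>_. 1)" using p0 p1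
      by (intro EE_mono) (use pw_uF in auto)
    finally show ?thesis using EE_one[OF finS] by simp
  qed
  have s2: "EE p S dF + EE p S uG \<le> 1"
  proof -
    have "EE p S dF + EE p S uG = EE p S (\<lambda>X. dF X + uG X)" by (simp add: EE_add)
    also have "\<dots> \<le> EE p S (\<lambda>_. 1)" using p0 p1
      by (intro EE_mono) (use pw_dF in auto)
    finally show ?thesis using EE_one[OF finS] by simp
  qed
  have nn: "\<And>h. (\<And>X. 0 \<le> h X) \<Longrightarrow> 0 \<le> EE p S h"
  proof -
    fix h :: "nat set \<Rightarrow> real" assume "\<And>X. 0 \<le> h X"
    then have "EE p S (\<lambda>_. 0) \<le> EE p S h" using p0 p1 by (intro EE_mono) auto
    then show "0 \<le> EE p S h" by (simp add: EE_def)
  qed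
  show ?thesis
    by (rule final_arith[OF nn nn nn nn hF hG s1 s2]) (auto simp: uF_def dF_def uG_def dG_def)
qed

end
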